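(* Let $\mathcal S$ be a complete separable metric space, $a,\rho,k>0$, and let $N$ be a point process on $\mathcal S$ such that (I) $N$ is almost surely boundedly finite and has no fixed atoms (i.e. $P\{N(\{x\})>0\}=0$ for every $x\in\mathcal S$); and (II) there is a function $m$ from the bounded Borel sets of $\mathcal S$ to $[0,\infty)$ such that for every finite family of pairwise disjoint bounded Borel sets $A_1,\dots,A_l$, the vector $(N(A_1),\dots,N(A_l))$ has the $\mathrm{MGWD}(a;k\,m(A_1),\dots,k\,m(A_l);\rho)$ distribution. Then there exists a boundedly finite nonatomic Borel measure $\mu$ on $\mathcal S$ with $\mu(A)=m(A)$ and $$P_0(A):=P\{N(A)=0\}=\frac{\rho_{(k\mu(A))}}{(\rho+a)_{(k\mu(A))}}$$ for every bounded Borel set $A$.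
   Context: For $x>0$, $\beta\ge0$ write $x_{(\beta)}=\Gamma(x+\beta)/\Gamma(x)$, with $0_{(0)}=1$ and $0_{(n)}=0$ for integers $n\ge1$. For $a,\rho>0$ and $k_1,\dots,k_s\ge 0$, $\mathrm{MGWD}(a;k_1,\dots,k_s;\rho)$ denotes the law on $\{0,1,2,\dots\}^s$ with $P(X_i=x_i,\ i=1,\dots,s)=\frac{\rho_{(\sum_i k_i)}\,a_{(\sum_i x_i)}}{(\rho+a)_{(\sum_i k_i+\sum_i x_i)}}\prod_{i=1}^s\frac{(k_i)_{(x_i)}}{x_i!}$. *)

theory Defs
  imports "HOL-Probability.Probability"
begin

definition rfact :: "real \<Rightarrow> real \<Rightarrow> real" where
  "rfact x \<beta> = (if x = 0 then (if \<beta> = 0 then 1 else 0) else Gamma (x + \<beta>) / Gamma x)"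

definition mgwd :: "real \<Rightarrow> (nat \<Rightarrow> real) \<Rightarrow> real \<Rightarrow> nat \<Rightarrow> (nat \<Rightarrow> nat) \<Rightarrow> real" where
  "mgwd a ks \<rho> l xs =
     rfact \<rho> (\<Sum>i<l. ks i) * rfact a (\<Sum>i<l. real (xs i))
     / rfact (\<rho> + a) ((\<Sum>i<l. ks i) + (\<Sum>i<l. real (xs i)))
     * (\<Prod>i<l. rfact (ks i) (real (xs i)) / fact (xs i))"

definition bdd_borel :: "'a::metric_space set \<Rightarrow> bool" where
  "bdd_borel A \<longleftrightarrow> A \<in> sets borel \<and> bounded A"

end

theory Submission imports Defs begin

lemma rfact_0: "(x::real) \<ge> 0 \<Longrightarrow> rfact x 0 = 1"
proof (cases "x = 0")
  case False
  assume "x \<ge> 0"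
  with False have "Gamma x > 0" by (intro Gamma_real_pos) auto
  then show ?thesis unfolding rfact_def using False by simp
qed (simp add: rfact_def)

lemma h_strict:
  fixes \<rho> a c d :: real
  assumes "\<rho> > 0" "a > 0" "0 \<le> c" "c < d"
  shows "ln_Gamma (\<rho>+d) - ln_Gamma (\<rho>+a+d) < ln_Gamma (\<rho>+c) - ln_Gamma (\<rho>+a+c)"
proof -
  let ?h = "\<lambda>t::real. ln_Gamma (\<rho>+t) - ln_Gamma (\<rho>+a+t)"
  have "\<exists>z. c < z \<and> z < d \<and> ?h d - ?h c = (d - c) * (Digamma (\<rho>+z) - Digamma (\<rho>+a+z))"
    using assms by (intro MVT2) (auto intro!: derivative_eq_intros)
  then obtain z where z: "c < z" "z < d" "?h d - ?h c = (d - c) * (Digamma (\<rho>+z) - Digamma (\<rho>+a+z))" by blast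
  have "Digamma (\<rho>+z) < Digamma (\<rho>+a+z)"
    using assms z by (intro Digamma_real_strict_mono) auto
  then have "(d - c) * (Digamma (\<rho>+z) - Digamma (\<rho>+a+z)) < 0"
    using assms by (intro mult_pos_neg) auto
  with z show ?thesis by simp
qed

lemma P0_eq:
  fixes \<rho> a c :: real
  assumes "\<rho> > 0" "a > 0" "0 \<le> c"
  shows "rfact \<rho> c / rfact (\<rho>+a) c = exp (ln_Gamma (\<rho>+c) - ln_Gamma (\<rho>+a+c)) * (Gamma (\<rho>+a) / Gamma \<rho>)"
proof -
  have g: "Gamma (\<rho>+c) = exp (ln_Gamma (\<rho>+c))" "Gamma (\<rho>+a+c) = exp (ln_Gamma (\<rho>+a+c))"
    using assms by (auto intro!: Gamma_real_pos_exp)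
  have p: "Gamma \<rho> > 0" "Gamma (\<rho>+a) > 0" using assms by (auto intro!: Gamma_real_pos)
  show ?thesis using assms p unfolding rfact_def g
    by (simp add: exp_diff field_simps)
qed

lemma P0_strict:
  fixes \<rho> a c d :: real
  assumes "\<rho> > 0" "a > 0" "0 \<le> c" "c < d"
  shows "rfact \<rho> d / rfact (\<rho>+a) d < rfact \<rho> c / rfact (\<rho>+a) c"
proof -
  have p: "Gamma \<rho> > 0" "Gamma (\<rho>+a) > 0" using assms by (auto intro!: Gamma_real_pos)
  show ?thesis using assms
    unfolding P0_eq[OF assms(1,2,3)] P0_eq[OF assms(1,2) order.trans[OF assms(3) less_imp_le[OF assms(4)]]]
    using h_strict[OF assms] p by (intro mult_strict_right_mono) auto
qed

lemma P0_inj: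
  fixes \<rho> a c d :: real
  assumes "\<rho> > 0" "a > 0" "0 \<le> c" "0 \<le> d"
    and "rfact \<rho> d / rfact (\<rho>+a) d = rfact \<rho> c / rfact (\<rho>+a) c"
  shows "c = d"
  using P0_strict[OF assms(1,2,3)] P0_strict[OF assms(1,2,4)] assms(5)
  by (metis linorder_neqE_linordered_idom order_less_irrefl)

lemma P0_zero: "\<rho> > 0 \<Longrightarrow> a > 0 \<Longrightarrow> rfact \<rho> 0 / rfact (\<rho>+a) 0 = (1::real)"
  by (simp add: rfact_0)

theorem theorem5:
  fixes M :: "'w measure"
    and N :: "'w \<Rightarrow> ('a::polish_space) measure"
    and m :: "'a set \<Rightarrow> real"
    and a \<rho> k :: real
  assumes "prob_space M"
    and "a > 0" and "\<rho> > 0" and "k > 0"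
    and "\<And>\<omega>. sets (N \<omega>) = sets borel"
    and "\<And>\<omega> A. A \<in> sets borel \<Longrightarrow> emeasure (N \<omega>) A \<in> range of_nat \<union> {\<infinity>}"
    and "\<And>A. A \<in> sets borel \<Longrightarrow> (\<lambda>\<omega>. emeasure (N \<omega>) A) \<in> borel_measurable M"
    and "AE \<omega> in M. \<forall>A. bdd_borel A \<longrightarrow> emeasure (N \<omega>) A < \<infinity>"
    and "\<And>x. measure M {\<omega>\<in>space M. emeasure (N \<omega>) {x} > 0} = 0"
    and "\<And>A. bdd_borel A \<Longrightarrow> m A \<ge> 0"
    and "\<And>l (A :: nat \<Rightarrow> 'a set) (xs :: nat \<Rightarrow> nat).
           (\<forall>i<l. bdd_borel (A i)) \<Longrightarrow> disjoint_family_on A {..<l} \<Longrightarrow>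
           measure M {\<omega>\<in>space M. \<forall>i<l. emeasure (N \<omega>) (A i) = of_nat (xs i)}
             = mgwd a (\<lambda>i. k * m (A i)) \<rho> l xs"
  shows "\<exists>\<mu> :: 'a measure. sets \<mu> = sets borel
           \<and> (\<forall>A. bdd_borel A \<longrightarrow> emeasure \<mu> A < \<infinity>)
           \<and> (\<forall>x. emeasure \<mu> {x} = 0)
           \<and> (\<forall>A. bdd_borel A \<longrightarrow>
                 emeasure \<mu> A = ennreal (m A)
               \<and> measure M {\<omega>\<in>space M. emeasure (N \<omega>) A = 0}
                   = rfact \<rho> (k * measure \<mu> A) / rfact (\<rho> + a) (k * measure \<mu> A))"
proof -
  interpret P: prob_space M by fact
  note mgwd = assms(11)
  define P0 where "P0 c = rfact \<rho> c / rfact (\<rho>+a) c" for c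
  define Z where "Z A = {\<omega>\<in>space M. emeasure (N \<omega>) A = 0}" for A
  have P0_strict': "P0 d < P0 c" if "0 \<le> c" "c < d" for c d
    unfolding P0_def using P0_strict[OF assms(3,2) that] .
  have P0_inj': "c = d" if "0 \<le> c" "0 \<le> d" "P0 c = P0 d" for c d
    using P0_inj[OF assms(3,2) that(1,2)] that(3) unfolding P0_def by metis
  have P0_0: "P0 0 = 1" unfolding P0_def using P0_zero[OF assms(3,2)] .
  have bb: "A \<in> sets borel" if "bdd_borel A" for A using that by (simp add: bdd_borel_def)
  have Zm: "Z A \<in> sets M" if "A \<in> sets borel" for A
  proof -
    have "Z A = (\<lambda>\<omega>. emeasure (N \<omega>) A) -` {0} \<inter> space M" by (auto simp: Z_def)
    also have "\<dots> \<in> sets M" by (rule measurable_sets[OF assms(7)[OF that]]) simp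
    finally show ?thesis .
  qed
  have single: "P.prob (Z A) = P0 (k * m A)" if "bdd_borel A" for A :: "'a set"
  proof -
    have "P.prob (Z A) = mgwd a (\<lambda>i. k * m A) \<rho> 1 (\<lambda>i. 0)"
      using mgwd[of 1 "\<lambda>i. A" "\<lambda>i. 0"] that by (simp add: disjoint_family_on_def Z_def)
    moreover have "k * m A \<ge> 0" using assms(4) assms(10)[OF that] by simp
    ultimately show ?thesis using assms(2,3)
      by (simp add: mgwd_def P0_def rfact_0)
  qed
  have pair: "P.prob (Z (A \<union> B)) = P0 (k * m A + k * m B)"
    if "bdd_borel A" "bdd_borel B" "A \<inter> B = {}" for A B :: "'a set"
  proof -
    define F where "F i = (if i = 0 then A else B)" for i :: nat
    have "P.prob {\<omega>\<in>space M. \<forall>i<2. emeasure (N \<omega>) (F i) = of_nat ((\<lambda>i. 0) i)}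
           = mgwd a (\<lambda>i. k * m (F i)) \<rho> 2 (\<lambda>i. 0)"
    proof -
      have pre1: "\<forall>i<2. bdd_borel (F i)" using that by (simp add: F_def)
      have pre2: "disjoint_family_on F {..<2}" using that by (auto simp: disjoint_family_on_def F_def)
      show ?thesis using mgwd[of 2 F "\<lambda>i. 0", OF pre1 pre2] by simp
    qed
    moreover have "{\<omega>\<in>space M. \<forall>i<2. emeasure (N \<omega>) (F i) = of_nat ((\<lambda>i. 0::nat) i)} = Z (A \<union> B)"
    proof -
      have "emeasure (N \<omega>) (A \<union> B) = emeasure (N \<omega>) A + emeasure (N \<omega>) B" for \<omega>
        using that assms(5)[of \<omega>] by (intro plus_emeasure[symmetric]) (auto simp: bdd_borel_def)
      moreover have "(\<forall>i<2. emeasure (N \<omega>) (F i) = of_nat ((\<lambda>i. 0::nat) i)) \<longleftrightarrow>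
          emeasure (N \<omega>) A = 0 \<and> emeasure (N \<omega>) B = 0" for \<omega>
      proof
        assume h: "\<forall>i<2. emeasure (N \<omega>) (F i) = of_nat ((\<lambda>i. 0::nat) i)"
        show "emeasure (N \<omega>) A = 0 \<and> emeasure (N \<omega>) B = 0"
          using h[rule_format, of 0] h[rule_format, of 1] by (simp add: F_def)
      next
        assume h: "emeasure (N \<omega>) A = 0 \<and> emeasure (N \<omega>) B = 0"
        show "\<forall>i<2. emeasure (N \<omega>) (F i) = of_nat ((\<lambda>i. 0::nat) i)"
          using h by (simp add: F_def)
      qed
      ultimately have "(\<omega> \<in> space M \<and> (\<forall>i<2. emeasure (N \<omega>) (F i) = of_nat ((\<lambda>i. 0::nat) i)))
          \<longleftrightarrow> (\<omega> \<in> space M \<and> emeasure (N \<omega>) (A \<union> B) = 0)" for \<omega>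
        by (simp only:) simp
      then show ?thesis unfolding Z_def by blast

    qed
    moreover have "mgwd a (\<lambda>i. k * m (F i)) \<rho> 2 (\<lambda>i. 0) = P0 (k * m A + k * m B)"
    proof -
      have nn: "k * m (F i) \<ge> 0" for i
        using assms(4) assms(10)[OF that(1)] assms(10)[OF that(2)] by (simp add: F_def)
      have s1: "(\<Sum>i<2. k * m (F i)) = k*m A + k*m B" by (simp add: numeral_2_eq_2 F_def)
      have p1: "(\<Prod>i<2. rfact (k * m (F i)) (real ((\<lambda>i. 0::nat) i)) / fact ((\<lambda>i. 0::nat) i)) = 1"
        by (rule prod.neutral) (simp add: rfact_0[OF nn])
      show ?thesis unfolding mgwd_def s1 p1 using assms(2,3) by (simp add: P0_def rfact_0)
    qed
    ultimately show ?thesis by simp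
  qed
  have bUn: "bdd_borel (A \<union> B)" if "bdd_borel A" "bdd_borel B" for A B :: "'a set"
    using that by (auto simp: bdd_borel_def)
  have bDiff: "bdd_borel (A - B)" if "bdd_borel A" "bdd_borel B" for A B :: "'a set"
    using that bounded_subset[of A "A - B"] by (auto simp: bdd_borel_def)
  have kmnn: "0 \<le> k * m A" if "bdd_borel A" for A :: "'a set"
    using assms(4) assms(10)[OF that] by simp
  have madd: "m (A \<union> B) = m A + m B" if "bdd_borel A" "bdd_borel B" "A \<inter> B = {}" for A B :: "'a set"
  proof -
    have h: "P0 (k * m (A \<union> B)) = P0 (k * m A + k * m B)"
      using single[OF bUn[OF that(1,2)]] pair[OF that] by simp
    have "k * m (A \<union> B) = k * m A + k * m B"
      by (rule P0_inj'[OF kmnn[OF bUn[OF that(1,2)]] add_nonneg_nonneg[OF kmnn[OF that(1)] kmnn[OF that(2)]] h])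
    then have "k * m (A \<union> B) = k * (m A + m B)" by (simp add: distrib_left)
    then show ?thesis using assms(4) by simp
  qed
  have mmono: "m B \<le> m A" if "bdd_borel A" "bdd_borel B" "B \<subseteq> A" for A B :: "'a set"
  proof -
    have e: "B \<union> (A - B) = A" using that by auto
    have "m (B \<union> (A - B)) = m B + m (A - B)" using madd[OF that(2) bDiff[OF that(1,2)]] by auto
    then have "m A = m B + m (A - B)" unfolding e .
    then show ?thesis using assms(10)[OF bDiff[OF that(1,2)]] by simp
  qed
  have P0_mono': "P0 d \<le> P0 c" if "0 \<le> c" "c \<le> d" for c d
    using P0_strict'[OF that(1)] that(2) by (cases "c = d") (auto intro: less_imp_le)
  have bempty: "bdd_borel ({} :: 'a set)" by (simp add: bdd_borel_def)
  have m0: "m {} = 0"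
  proof -
    have "Z {} = space M" by (auto simp: Z_def)
    then have "P0 (k * m {}) = P0 0" using single[OF bempty] P0_0 P.prob_space by simp
    then have "k * m {} = 0" by (rule P0_inj'[OF kmnn[OF bempty] order_refl])
    then show ?thesis using assms(4) by simp
  qed
  define R where "R = {A :: 'a set. bdd_borel A}"
  have ring: "ring_of_sets UNIV R"
    unfolding ring_of_sets_iff R_def using bUn bDiff bempty by auto
  define f where "f A = ennreal (m A)" for A
  have pos: "positive R f" unfolding positive_def f_def using m0 by simp
  have add: "additive R f" unfolding additive_def f_def R_def
  proof (intro ballI impI)
    fix x y :: "'a set" assume xy: "x \<in> {A. bdd_borel A}" "y \<in> {A. bdd_borel A}" "x \<inter> y = {}"
    then show "ennreal (m (x \<union> y)) = ennreal (m x) + ennreal (m y)"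
      using madd[of x y] assms(10)[of x] assms(10)[of y] by (simp add: ennreal_plus)
  qed
  have fin: "f A \<noteq> \<infinity>" if "A \<in> R" for A by (simp add: f_def)
  have cont: "(\<lambda>i. f (A i)) \<longlonglongrightarrow> 0" if hA: "range A \<subseteq> R" and hdec: "decseq A" and hI: "(\<Inter>i. A i) = {}" for A
  proof -
    have bA: "bdd_borel (A i)" for i using hA by (auto simp: R_def)
    have sub: "A j \<subseteq> A i" if "i \<le> j" for i j using \<open>decseq A\<close> that by (simp add: decseq_def)
    have small: "\<exists>n. m (A n) < e" if "e > 0" for e
    proof (rule ccontr)
      assume "\<not> (\<exists>n. m (A n) < e)"
      then have ge: "e \<le> m (A n)" for n by (simp add: not_less)
      have le: "P.prob (Z (A n)) \<le> P0 (k * e)" for n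
        unfolding single[OF bA] using ge[of n] assms(4) that by (intro P0_mono') auto
      have lt: "P0 (k * e) < 1" using P0_strict'[of 0 "k * e"] P0_0 assms(4) that by simp
      have incZ: "incseq (\<lambda>n. Z (A n))"
      proof (rule incseq_SucI)
        fix n show "Z (A n) \<subseteq> Z (A (Suc n))"
        proof
          fix \<omega> assume "\<omega> \<in> Z (A n)"
          moreover have "emeasure (N \<omega>) (A (Suc n)) \<le> emeasure (N \<omega>) (A n)"
            using sub[of n "Suc n"] bb[OF bA[of n]] assms(5)[of \<omega>] by (intro emeasure_mono) auto
          ultimately show "\<omega> \<in> Z (A (Suc n))" by (auto simp: Z_def)
        qed
      qed
      have Zev: "Z (A n) \<in> sets M" for n by (rule Zm[OF bb[OF bA]])
      have lim: "(\<lambda>n. P.prob (Z (A n))) \<longlonglongrightarrow> P.prob (\<Union>n. Z (A n))"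
        by (rule P.finite_Lim_measure_incseq) (use Zev incZ in auto)
      have Uev: "(\<Union>n. Z (A n)) \<in> sets M" using Zev by auto
      have "AE \<omega> in M. \<omega> \<in> (\<Union>n. Z (A n))"
        using assms(8) AE_space
      proof eventually_elim
        case (elim \<omega>)
        have fin\<omega>: "emeasure (N \<omega>) (A i) \<noteq> \<infinity>" for i using elim(1) bA[of i] by auto
        have "(\<lambda>i. emeasure (N \<omega>) (A i)) \<longlonglongrightarrow> emeasure (N \<omega>) (\<Inter>i. A i)"
          by (rule Lim_emeasure_decseq) (use bb[OF bA] assms(5)[of \<omega>] \<open>decseq A\<close> fin\<omega> in auto)
        then have "(\<lambda>i. emeasure (N \<omega>) (A i)) \<longlonglongrightarrow> 0" using hI by simp
        then have "eventually (\<lambda>i. emeasure (N \<omega>) (A i) < 1) sequentially"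
          by (rule order_tendstoD(2)) simp
        then obtain n where n: "emeasure (N \<omega>) (A n) < 1"
          by (auto simp: eventually_sequentially)
        from assms(6)[OF bb[OF bA[of n]], of \<omega>] fin\<omega>[of n]
        obtain j :: nat where j: "emeasure (N \<omega>) (A n) = of_nat j" by auto
        with n have "j = 0" by simp
        with j elim(2) have "\<omega> \<in> Z (A n)" by (simp add: Z_def)
        then show ?case by blast
      qed
      then have "P.prob (\<Union>n. Z (A n)) = 1" using P.AE_in_set_eq_1[OF Uev] by simp
      with lim have "(\<lambda>n. P.prob (Z (A n))) \<longlonglongrightarrow> 1" by simp
      then have "eventually (\<lambda>n. P0 (k * e) < P.prob (Z (A n))) sequentially"
        by (rule order_tendstoD(1)) (rule lt)
      then obtain n where "P0 (k * e) < P.prob (Z (A n))" by (auto simp: eventually_sequentially)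
      with le[of n] show False by simp
    qed
    have "(\<lambda>i. m (A i)) \<longlonglongrightarrow> 0"
    proof (rule LIMSEQ_I)
      fix r :: real assume "0 < r"
      then obtain n0 where n0: "m (A n0) < r" using small by blast
      have "norm (m (A n) - 0) < r" if "n0 \<le> n" for n
        using mmono[OF bA bA sub[OF that]] n0 assms(10)[OF bA[of n]] by simp
      then show "\<exists>no. \<forall>n\<ge>no. norm (m (A n) - 0) < r" by blast
    qed
    then have "(\<lambda>i. ennreal (m (A i))) \<longlonglongrightarrow> ennreal 0" by (rule tendsto_ennrealI)
    then show ?thesis by (simp add: f_def)
  qed
  obtain \<mu>' where \<mu>': "\<forall>s\<in>R. \<mu>' s = f s" "measure_space UNIV (sigma_sets UNIV R) \<mu>'"
    using ring_of_sets.caratheodory_empty_continuous[OF ring pos add fin cont] by blast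
  define \<mu> where "\<mu> = measure_of UNIV (sigma_sets UNIV R) \<mu>'"
  interpret S: sigma_algebra UNIV "sigma_sets UNIV R" by (rule sigma_algebra_sigma_sets) simp
  have sets\<mu>: "sets \<mu> = sigma_sets UNIV R" unfolding \<mu>_def by simp
  have em\<mu>: "emeasure \<mu> A = ennreal (m A)" if "bdd_borel A" for A
  proof -
    have AR: "A \<in> sigma_sets UNIV R" using that by (auto simp: R_def intro: sigma_sets.Basic)
    have "emeasure \<mu> A = \<mu>' A" unfolding \<mu>_def
      using \<mu>'(2) AR by (intro emeasure_measure_of_sigma) (auto simp: measure_space_def)
    also have "\<dots> = f A" using \<mu>'(1) that by (auto simp: R_def)
    finally show ?thesis by (simp add: f_def)
  qed
  have sig: "sigma_sets UNIV R = sets borel"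
  proof
    show "sigma_sets UNIV R \<subseteq> sets borel"
      using sets.sigma_sets_subset[of R borel] by (auto simp: R_def bdd_borel_def)
    show "sets borel \<subseteq> sigma_sets UNIV R"
    proof
      fix B :: "'a set" assume B: "B \<in> sets borel"
      define c :: 'a where "c = undefined"
      have "B = (\<Union>n::nat. B \<inter> ball c (real n))"
      proof (intro equalityI subsetI)
        fix x assume "x \<in> B"
        obtain n :: nat where "dist c x < real n" using reals_Archimedean2 by blast
        with \<open>x \<in> B\<close> show "x \<in> (\<Union>n::nat. B \<inter> ball c (real n))" by auto
      qed auto
      moreover have "B \<inter> ball c (real n) \<in> sigma_sets UNIV R" for n
        using B by (intro sigma_sets.Basic) (auto simp: R_def bdd_borel_def bounded_Int)
      ultimately show "B \<in> sigma_sets UNIV R" by (metis sigma_sets.Union)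
    qed
  qed
  have matom: "m {x} = 0" for x
  proof -
    have bx: "bdd_borel {x}" by (simp add: bdd_borel_def)
    have Zx: "Z {x} \<in> sets M" by (rule Zm[OF bb[OF bx]])
    have S: "{\<omega>\<in>space M. emeasure (N \<omega>) {x} > 0} = space M - Z {x}"
      by (auto simp: Z_def zero_less_iff_neq_zero)
    have "P.prob (space M - (space M - Z {x})) = 1 - P.prob (space M - Z {x})"
      using Zx by (intro P.prob_compl) auto
    moreover have "space M - (space M - Z {x}) = Z {x}" by (auto simp: Z_def)
    ultimately have "P.prob (Z {x}) = 1" using assms(9)[of x] S by simp
    then have "P0 (k * m {x}) = P0 0" using single[OF bx] P0_0 by simp
    then have "k * m {x} = 0" by (rule P0_inj'[OF kmnn[OF bx] order_refl])
    then show ?thesis using assms(4) by simp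
  qed
  have meas\<mu>: "measure \<mu> A = m A" if "bdd_borel A" for A
    using em\<mu>[OF that] assms(10)[OF that] by (simp add: measure_def)
  show ?thesis
  proof (intro exI[of _ \<mu>] conjI allI impI)
    show "sets \<mu> = sets borel" using sets\<mu> sig by simp
  next
    fix A :: "'a set" assume "bdd_borel A"
    then show "emeasure \<mu> A < \<infinity>" using em\<mu> by simp
  next
    fix x :: 'a
    have "bdd_borel {x}" by (simp add: bdd_borel_def)
    then show "emeasure \<mu> {x} = 0" using em\<mu> matom by simp
  next
    fix A :: "'a set" assume "bdd_borel A"
    then show "emeasure \<mu> A = ennreal (m A)" using em\<mu> by simp
  next
    fix A :: "'a set" assume A: "bdd_borel A"
    show "measure M {\<omega>\<in>space M. emeasure (N \<omega>) A = 0}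
                   = rfact \<rho> (k * measure \<mu> A) / rfact (\<rho> + a) (k * measure \<mu> A)"
      using single[OF A] meas\<mu>[OF A] by (simp add: Z_def P0_def)
  qed
qed
end
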